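(* Let $G=(V,E)$ be a strongly connected digraph and $s\in V$. Let $r$ be a marked vertex and let $v$ be a vertex that is not a descendant of $r$ in $D(s)$. Then there is a path in $G$ from $v$ to $r$ that contains no vertex of $T(r)\setminus\{r\}$. Moreover, every simple path in $G$ from $v$ to any vertex of $T(r)$ contains the edge $(d(r),r)$.
   Context: For a digraph $G=(V,E)$ and $s\in V$ with every vertex reachable from $s$, $G(s)$ is the flow graph with start vertex $s$; $u$ dominates $w$ if every path from $s$ to $w$ contains $u$; the dominator tree $D(s)$ is the rooted tree on $V$ with root $s$ in which $u$ is an ancestor of $w$ iff $u$ dominates $w$; $d(w)$ is the parent of $w\neq s$. An edge $(u,w)$ is a bridge of $G(s)$ if every path from $s$ to $w$ contains it (then $u=d(w)$). A vertex $w\neq s$ is marked if $(d(w),w)$ is a bridge of $G(s)$. Deleting from $D(s)$ all edges $(d(w),w)$ with $w$ marked decomposes $D(s)$ into a forest of subtrees, each rooted at $s$ or at a marked vertex; $T(v)$ denotes the subtree containing $v$. *)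

theory Defs
  imports Main
begin

definition digraph :: "'a set \<Rightarrow> ('a \<times> 'a) set \<Rightarrow> bool" where
  "digraph V E \<longleftrightarrow> finite V \<and> E \<subseteq> V \<times> V"

definition is_path :: "'a set \<Rightarrow> ('a \<times> 'a) set \<Rightarrow> 'a list \<Rightarrow> 'a \<Rightarrow> 'a \<Rightarrow> bool" where
  "is_path V E p u w \<longleftrightarrow> p \<noteq> [] \<and> hd p = u \<and> last p = w \<and> set p \<subseteq> V \<and>
     (\<forall>i. Suc i < length p \<longrightarrow> (p ! i, p ! Suc i) \<in> E)"

definition simple_path :: "'a set \<Rightarrow> ('a \<times> 'a) set \<Rightarrow> 'a list \<Rightarrow> 'a \<Rightarrow> 'a \<Rightarrow> bool" where
  "simple_path V E p u w \<longleftrightarrow> is_path V E p u w \<and> distinct p"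

definition path_has_edge :: "'a list \<Rightarrow> 'a \<times> 'a \<Rightarrow> bool" where
  "path_has_edge p e \<longleftrightarrow> (\<exists>i. Suc i < length p \<and> (p ! i, p ! Suc i) = e)"

definition strongly_connected :: "'a set \<Rightarrow> ('a \<times> 'a) set \<Rightarrow> bool" where
  "strongly_connected V E \<longleftrightarrow> (\<forall>u\<in>V. \<forall>w\<in>V. \<exists>p. is_path V E p u w)"

definition dominates :: "'a set \<Rightarrow> ('a \<times> 'a) set \<Rightarrow> 'a \<Rightarrow> 'a \<Rightarrow> 'a \<Rightarrow> bool" where
  "dominates V E s u w \<longleftrightarrow> u \<in> V \<and> w \<in> V \<and> (\<forall>p. is_path V E p s w \<longrightarrow> u \<in> set p)"

text \<open>Parent d(w) of w in the dominator tree D(s): the immediate dominator.\<close>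
definition idom :: "'a set \<Rightarrow> ('a \<times> 'a) set \<Rightarrow> 'a \<Rightarrow> 'a \<Rightarrow> 'a" where
  "idom V E s w = (THE u. u \<noteq> w \<and> dominates V E s u w \<and>
      (\<forall>x. dominates V E s x w \<and> x \<noteq> w \<longrightarrow> dominates V E s x u))"

definition is_bridge :: "'a set \<Rightarrow> ('a \<times> 'a) set \<Rightarrow> 'a \<Rightarrow> 'a \<times> 'a \<Rightarrow> bool" where
  "is_bridge V E s e \<longleftrightarrow> e \<in> E \<and> (\<forall>p. is_path V E p s (snd e) \<longrightarrow> path_has_edge p e)"

definition marked :: "'a set \<Rightarrow> ('a \<times> 'a) set \<Rightarrow> 'a \<Rightarrow> 'a \<Rightarrow> bool" where
  "marked V E s w \<longleftrightarrow> w \<in> V \<and> w \<noteq> s \<and> is_bridge V E s (idom V E s w, w)"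

definition forest_edges :: "'a set \<Rightarrow> ('a \<times> 'a) set \<Rightarrow> 'a \<Rightarrow> ('a \<times> 'a) set" where
  "forest_edges V E s = {(idom V E s w, w) | w. w \<in> V \<and> w \<noteq> s \<and> \<not> marked V E s w}"

definition subtree_T :: "'a set \<Rightarrow> ('a \<times> 'a) set \<Rightarrow> 'a \<Rightarrow> 'a \<Rightarrow> 'a set" where
  "subtree_T V E s v = {w. (v, w) \<in> (forest_edges V E s \<union> (forest_edges V E s)\<inverse>)\<^sup>*}"

end

theory Submission
  imports Defs
begin

lemma path_single: "is_path V E [x] u w \<longleftrightarrow> x = u \<and> w = u \<and> u \<in> V"
  by (auto simp: is_path_def)

lemma path_Cons2: "is_path V E (x # y # p) u w \<longleftrightarrow> x = u \<and> x \<in> V \<and> (x,y) \<in> E \<and> is_path V E (y # p) y w"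
proof
  assume h: "is_path V E (x # y # p) u w"
  then have e: "\<forall>i. Suc i < length (x#y#p) \<longrightarrow> ((x#y#p) ! i, (x#y#p) ! Suc i) \<in> E"
    unfolding is_path_def by blast
  have "(x,y) \<in> E" using e[rule_format, of 0] by simp
  moreover have "\<forall>i. Suc i < length (y#p) \<longrightarrow> ((y#p) ! i, (y#p) ! Suc i) \<in> E"
    using e by (metis Suc_less_eq length_Cons nth_Cons_Suc)
  moreover have "x = u" "x \<in> V" "last (y#p) = w" "set (y#p) \<subseteq> V" using h by (auto simp: is_path_def)
  ultimately show "x = u \<and> x \<in> V \<and> (x,y) \<in> E \<and> is_path V E (y # p) y w"
    by (simp add: is_path_def)
next
  assume h: "x = u \<and> x \<in> V \<and> (x,y) \<in> E \<and> is_path V E (y # p) y w"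
  have "\<forall>i. Suc i < length (x#y#p) \<longrightarrow> ((x#y#p) ! i, (x#y#p) ! Suc i) \<in> E"
  proof (intro allI impI)
    fix i assume "Suc i < length (x#y#p)"
    then show "((x#y#p) ! i, (x#y#p) ! Suc i) \<in> E"
      using h by (cases i) (auto simp: is_path_def)
  qed
  then show "is_path V E (x # y # p) u w" using h by (auto simp: is_path_def)
qed

lemma path_ends: "is_path V E p u w \<Longrightarrow> u \<in> V \<and> w \<in> V"
  unfolding is_path_def by (metis hd_in_set last_in_set subsetD)

lemma path_app: "is_path V E p u x \<Longrightarrow> is_path V E q x w \<Longrightarrow> is_path V E (p @ tl q) u w"
proof (induction p arbitrary: u)
  case Nil then show ?case by (simp add: is_path_def)
next
  case (Cons a p)
  note pr = Cons.prems
  note ih = Cons.IH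
  show ?case
  proof (cases p)
    case Nil
    then have "a = u" "x = u" using pr by (auto simp: path_single)
    moreover have "q = x # tl q" using pr(2) unfolding is_path_def
      by (metis list.collapse)
    ultimately show ?thesis using pr Nil by simp
  next
    case (Cons b p')
    then show ?thesis using pr ih[of b] by (auto simp: path_Cons2)
  qed
qed

lemma path_snoc: "is_path V E p u x \<Longrightarrow> (x,y) \<in> E \<Longrightarrow> y \<in> V \<Longrightarrow> is_path V E (p @ [y]) u y"
  using path_app[of V E p u x "[x,y]" y] path_ends[of V E p u x]
  by (simp add: path_Cons2 path_single)

lemma path_split: "is_path V E (xs @ x # ys) u w \<Longrightarrow> is_path V E (xs @ [x]) u x \<and> is_path V E (x # ys) x w"
proof (induction xs arbitrary: u)
  case Nil
  then show ?case by (auto simp: is_path_def)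
next
  case (Cons a xs)
  note pr = Cons.prems
  note ih = Cons.IH
  show ?case
  proof (cases xs)
    case Nil
    then show ?thesis using pr by (auto simp: path_Cons2 path_single dest: path_ends)
  next
    case (Cons b xs')
    then show ?thesis using pr ih[of b] by (auto simp: path_Cons2)
  qed
qed

lemma dom_refl: "u \<in> V \<Longrightarrow> dominates V E s u u"
  by (auto simp: dominates_def is_path_def)

lemma dom_s: "s \<in> V \<Longrightarrow> w \<in> V \<Longrightarrow> dominates V E s s w"
  by (auto simp: dominates_def is_path_def)

lemma dom_trans:
  assumes "dominates V E s a b" "dominates V E s b c" shows "dominates V E s a c"
  unfolding dominates_def
proof (intro conjI allI impI)
  show "a \<in> V" "c \<in> V" using assms by (auto simp: dominates_def)
  fix p assume p: "is_path V E p s c"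
  then have "b \<in> set p" using assms(2) by (auto simp: dominates_def)
  then obtain xs ys where "p = xs @ b # ys" by (meson split_list)
  then have "is_path V E (xs @ [b]) s b" using p path_split by metis
  then have "a \<in> set (xs @ [b])" using assms(1) by (auto simp: dominates_def)
  then show "a \<in> set p" using \<open>p = xs @ b # ys\<close> by auto
qed

lemma dom_avoid:
  assumes "\<not> dominates V E s r v" "r \<in> V" "v \<in> V"
  shows "\<exists>p. is_path V E p s v \<and> r \<notin> set p"
  using assms by (auto simp: dominates_def)

lemma dom_antisym:
  assumes sc: "strongly_connected V E" and sV: "s \<in> V"
    and ab: "dominates V E s a b" and ba: "dominates V E s b a"
  shows "a = b"
proof (rule ccontr)
  assume ne: "a \<noteq> b"
  have aV: "a \<in> V" using ab by (auto simp: dominates_def)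
  then obtain p where p: "is_path V E p s a" using sc sV by (auto simp: strongly_connected_def)
  then have "a \<in> set p" unfolding is_path_def by (metis last_in_set)
  then obtain xs ys where xs: "p = xs @ a # ys" "a \<notin> set xs" by (meson split_list_first)
  then have q: "is_path V E (xs @ [a]) s a" using p path_split by metis
  then have "b \<in> set (xs @ [a])" using ba by (auto simp: dominates_def)
  then have "b \<in> set xs" using ne by auto
  then obtain xs1 xs2 where xs1: "xs = xs1 @ b # xs2" by (meson split_list)
  then have "is_path V E (xs1 @ [b]) s b" using q path_split[of V E xs1 b "xs2 @ [a]" s a] by simp
  then have "a \<in> set (xs1 @ [b])" using ab by (auto simp: dominates_def)
  then show False using xs xs1 ne by auto
qed

lemma dom_total:
  assumes sc: "strongly_connected V E" and sV: "s \<in> V"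
    and aw: "dominates V E s a w" and bw: "dominates V E s b w"
  shows "dominates V E s a b \<or> dominates V E s b a"
proof (rule ccontr)
  assume "\<not> (dominates V E s a b \<or> dominates V E s b a)"
  then have nab: "\<not> dominates V E s a b" and nba: "\<not> dominates V E s b a" by auto
  have aV: "a \<in> V" and bV: "b \<in> V" and wV: "w \<in> V" using aw bw by (auto simp: dominates_def)
  obtain P where P: "is_path V E P s b" "a \<notin> set P" using dom_avoid[OF nab aV bV] by blast
  obtain Q where Q: "is_path V E Q s a" "b \<notin> set Q" using dom_avoid[OF nba bV aV] by blast
  obtain S where S: "is_path V E S a w" using sc aV wV by (auto simp: strongly_connected_def)
  have "is_path V E (Q @ tl S) s w" using path_app[OF Q(1) S] .
  then have "b \<in> set (Q @ tl S)" using bw by (auto simp: dominates_def)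
  then have "b \<in> set (tl S)" using Q by auto
  then have "b \<in> set S" by (cases S) auto
  then obtain xs ys where xs: "S = xs @ b # ys" "b \<notin> set ys" by (meson split_list_last)
  then have bys: "is_path V E (b # ys) b w" using S path_split by metis
  show False
  proof (cases "a \<in> set ys")
    case False
    have "is_path V E (P @ tl (b # ys)) s w" using path_app[OF P(1) bys] .
    then have "a \<in> set (P @ ys)" using aw by (auto simp: dominates_def)
    then show False using P False by auto
  next
    case True
    then obtain zs us where zs: "ys = zs @ a # us" by (meson split_list)
    then have "is_path V E (a # us) a w" using bys path_split[of V E "b # zs" a us b w] by simp
    then have "is_path V E (Q @ tl (a # us)) s w" using path_app[OF Q(1)] by blast
    then have "b \<in> set (Q @ us)" using bw by (auto simp: dominates_def)
    then show False using Q xs zs by auto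
  qed
qed

lemma idom_props:
  assumes dg: "digraph V E" and sc: "strongly_connected V E" and sV: "s \<in> V"
    and wV: "w \<in> V" and ws: "w \<noteq> s"
  shows "idom V E s w \<noteq> w \<and> dominates V E s (idom V E s w) w \<and>
      (\<forall>x. dominates V E s x w \<and> x \<noteq> w \<longrightarrow> dominates V E s x (idom V E s w))"
proof -
  define D where "D = {u. u \<noteq> w \<and> dominates V E s u w}"
  define A where "A u = {x \<in> D. dominates V E s x u}" for u
  have "D \<subseteq> V" unfolding D_def dominates_def by auto
  then have finD: "finite D" using dg unfolding digraph_def by (metis finite_subset)
  have "s \<in> D" using ws dom_s[OF sV wV] unfolding D_def by auto
  then have ne: "D \<noteq> {}" by auto
  define m where "m = Max ((\<lambda>u. card (A u)) ` D)"
  have "m \<in> (\<lambda>u. card (A u)) ` D" unfolding m_def using finD ne by simp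
  then obtain u where uD: "u \<in> D" and um: "card (A u) = m" by auto
  have mx: "card (A y) \<le> m" if "y \<in> D" for y unfolding m_def using finD that by simp
  let ?P = "\<lambda>u. u \<noteq> w \<and> dominates V E s u w \<and>
      (\<forall>x. dominates V E s x w \<and> x \<noteq> w \<longrightarrow> dominates V E s x u)"
  have Pu: "?P u"
  proof -
    have "dominates V E s x u" if x: "dominates V E s x w" "x \<noteq> w" for x
    proof (rule ccontr)
      assume nxu: "\<not> dominates V E s x u"
      have "dominates V E s u x" using dom_total[OF sc sV x(1), of u] uD nxu unfolding D_def by auto
      have xD: "x \<in> D" using x unfolding D_def by auto
      have sub: "A u \<subseteq> A x" unfolding A_def using dom_trans[OF _ \<open>dominates V E s u x\<close>] by auto
      have "x \<in> A x" using xD dom_refl[of x V E s] x unfolding A_def dominates_def by auto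
      moreover have "x \<notin> A u" using nxu unfolding A_def by auto
      ultimately have "A u \<subset> A x" using sub by auto
      moreover have "finite (A x)" using finD unfolding A_def by auto
      ultimately have "card (A u) < card (A x)" by (simp add: psubset_card_mono)
      then show False using mx[OF xD] um by simp
    qed
    then show ?thesis using uD unfolding D_def by auto
  qed
  have "?P y \<Longrightarrow> y = u" for y
    using Pu dom_antisym[OF sc sV] by blast
  then have "idom V E s w = u" unfolding idom_def using Pu by (rule the_equality[rotated])
  then show ?thesis using Pu by simp
qed

lemma T_dom:
  assumes dg: "digraph V E" and sc: "strongly_connected V E" and sV: "s \<in> V"
    and mr: "marked V E s r" and x: "x \<in> subtree_T V E s r"
  shows "dominates V E s r x"
proof -
  let ?F = "forest_edges V E s"
  have rV: "r \<in> V" using mr by (simp add: marked_def)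
  have "(r, x) \<in> (?F \<union> ?F\<inverse>)\<^sup>*" using x by (simp add: subtree_T_def)
  then show ?thesis
  proof (induction rule: rtrancl_induct)
    case base then show ?case using dom_refl[OF rV] .
  next
    case (step y z)
    from step.hyps(2) show ?case
    proof
      assume "(y, z) \<in> ?F"
      then obtain w where w: "y = idom V E s w" "z = w" "w \<in> V" "w \<noteq> s"
        by (auto simp: forest_edges_def)
      then show ?case using idom_props[OF dg sc sV w(3,4)] dom_trans[OF step.IH] by auto
    next
      assume "(y, z) \<in> ?F\<inverse>"
      then obtain w where w: "z = idom V E s w" "y = w" "w \<in> V" "w \<noteq> s" "\<not> marked V E s w"
        by (auto simp: forest_edges_def)
      then have "w \<noteq> r" using mr by auto
      then show ?case using idom_props[OF dg sc sV w(3,4)] step.IH w by auto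
    qed
  qed
qed

lemma first_dom:
  assumes sc: "strongly_connected V E" and sV: "s \<in> V"
    and p: "is_path V E p v x" and nv: "\<not> dominates V E s r v"
    and rV: "r \<in> V" and rx: "dominates V E s r x"
  shows "\<exists>ys zs P. p = ys @ r # zs \<and> ys \<noteq> [] \<and> (\<forall>y\<in>set ys. \<not> dominates V E s r y)
     \<and> is_path V E (ys @ [r]) v r \<and> is_path V E P s (last ys) \<and> r \<notin> set P"
proof -
  have "x \<in> set p" using p unfolding is_path_def by (metis last_in_set)
  then obtain ys y0 zs where sp: "p = ys @ y0 # zs" "dominates V E s r y0"
      "\<forall>y\<in>set ys. \<not> dominates V E s r y"
    using split_list_first_prop[of p "dominates V E s r"] rx by blast
  have ne: "ys \<noteq> []"
  proof
    assume "ys = []" then have "hd p = y0" using sp by simp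
    then show False using p sp nv by (simp add: is_path_def)
  qed
  have p1: "is_path V E (ys @ [y0]) v y0" using p sp path_split by metis
  define y where "y = last ys"
  have ysd: "ys = butlast ys @ [y]" using ne y_def by simp
  have "is_path V E (butlast ys @ y # [y0]) v y0" using p1 ysd by (metis append.assoc append_Cons append_Nil)
  then have a: "is_path V E (butlast ys @ [y]) v y" "is_path V E [y, y0] y y0" using path_split by metis+
  then have e: "(y, y0) \<in> E" and yV: "y \<in> V" and y0V: "y0 \<in> V" by (auto simp: path_Cons2 path_single)
  have "\<not> dominates V E s r y" using sp(3) ysd by (metis in_set_conv_decomp)
  then obtain P where P: "is_path V E P s y" "r \<notin> set P" using dom_avoid[OF _ rV yV] by blast
  have "is_path V E (P @ [y0]) s y0" using path_snoc[OF P(1) e y0V] .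
  then have "r \<in> set (P @ [y0])" using sp(2) by (auto simp: dominates_def)
  then have "y0 = r" using P by auto
  then show ?thesis using sp ne p1 P y_def by blast
qed

lemma last_edge:
  assumes "is_path V E (ys @ [r]) v r" "ys \<noteq> []"
  shows "(last ys, r) \<in> E"
proof -
  have "ys @ [r] = butlast ys @ last ys # [r]" using assms(2) by simp
  then have "is_path V E [last ys, r] (last ys) r" using assms(1) path_split by metis
  then show ?thesis by (simp add: path_Cons2)
qed

theorem mainTheorem7:
  fixes V :: "'a set" and E :: "('a \<times> 'a) set" and s r v :: 'a
  assumes "digraph V E"
    and "strongly_connected V E"
    and "s \<in> V"
    and "marked V E s r"
    and "v \<in> V"
    and "\<not> dominates V E s r v"
  shows "(\<exists>p. is_path V E p v r \<and> set p \<inter> (subtree_T V E s r - {r}) = {})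
       \<and> (\<forall>w\<in>subtree_T V E s r. \<forall>p. simple_path V E p v w
              \<longrightarrow> path_has_edge p (idom V E s r, r))"
proof
  note dg = assms(1) and sc = assms(2) and sV = assms(3) and mr = assms(4) and vV = assms(5)
    and nv = assms(6)
  have rV: "r \<in> V" using mr by (simp add: marked_def)
  show "\<exists>p. is_path V E p v r \<and> set p \<inter> (subtree_T V E s r - {r}) = {}"
  proof -
    obtain p where p: "is_path V E p v r" using sc vV rV by (auto simp: strongly_connected_def)
    obtain ys zs P where ys: "p = ys @ r # zs" "ys \<noteq> []" "\<forall>y\<in>set ys. \<not> dominates V E s r y"
       "is_path V E (ys @ [r]) v r"
      using first_dom[OF sc sV p nv rV dom_refl[OF rV]] by blast
    have "set (ys @ [r]) \<inter> (subtree_T V E s r - {r}) = {}"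
      using ys(3) T_dom[OF dg sc sV mr] by auto
    then show ?thesis using ys(4) by blast
  qed
  show "\<forall>w\<in>subtree_T V E s r. \<forall>p. simple_path V E p v w \<longrightarrow> path_has_edge p (idom V E s r, r)"
  proof (intro ballI allI impI)
    fix w p assume w: "w \<in> subtree_T V E s r" and sp: "simple_path V E p v w"
    have p: "is_path V E p v w" using sp by (simp add: simple_path_def)
    obtain ys zs P where ys: "p = ys @ r # zs" "ys \<noteq> []"
       "is_path V E (ys @ [r]) v r" "is_path V E P s (last ys)" "r \<notin> set P"
      using first_dom[OF sc sV p nv rV T_dom[OF dg sc sV mr w]] by blast
    have e: "(last ys, r) \<in> E" using last_edge[OF ys(3,2)] .
    have Pr: "is_path V E (P @ [r]) s r" using path_snoc[OF ys(4) e rV] .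
    have br: "is_bridge V E s (idom V E s r, r)" using mr by (simp add: marked_def)
    then have "path_has_edge (P @ [r]) (idom V E s r, r)" using Pr by (auto simp: is_bridge_def)
    then obtain i where i: "Suc i < length (P @ [r])" "(P @ [r]) ! i = idom V E s r"
        "(P @ [r]) ! Suc i = r" by (auto simp: path_has_edge_def)
    have Pne: "P \<noteq> []" using ys(4) by (simp add: is_path_def)
    have "\<not> Suc i < length P"
    proof
      assume "Suc i < length P"
      then have "P ! Suc i = r" using i(3) by (simp add: nth_append)
      then show False using ys(5) \<open>Suc i < length P\<close> by (metis nth_mem)
    qed
    then have "Suc i = length P" using i(1) by simp
    then have "idom V E s r = last P" using i(2) Pne
      by (metis diff_Suc_1 last_conv_nth lessI nth_append)
    also have "last P = last ys" using ys(4) by (simp add: is_path_def)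
    finally have id: "idom V E s r = last ys" .
    have "Suc (length ys - 1) < length p" using ys(1,2) by simp
    moreover have "p ! (length ys - 1) = last ys" using ys(1,2)
      by (simp add: nth_append last_conv_nth)
    moreover have "p ! Suc (length ys - 1) = r" using ys(1,2) by (simp add: nth_append)
    ultimately show "path_has_edge p (idom V E s r, r)" unfolding path_has_edge_def id by blast
  qed
qed

end
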